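(* Let $m, n, T$ be positive integers. For each $t \in \{1,\dots,T\}$ let $\mathcal{X}_t = \{ S_t \mid S_t \subseteq [0,1]^m,\ |S_t| = n \}$, and let $\mathcal{X} = \mathcal{X}_1 \times \mathcal{X}_2 \times \cdots \times \mathcal{X}_T$ be the set of point cloud sequences $S = (S_1, \dots, S_T)$ of length $T$. Equip $\mathcal{X}$ with the distance $d_{seq}(S, S') = \max_{t} d_H(S_t, S'_t)$, where $d_H$ is the Hausdorff distance between finite subsets of $[0,1]^m$ (with respect to the Euclidean distance). Suppose $f : \mathcal{X} \to \mathbb{R}$ is continuous with respect to $d_{seq}$, i.e. for every $\epsilon>0$ there is $\delta>0$ such that for all $S, S' \in \mathcal{X}$ with $d_{seq}(S,S') < \delta$ we have $|f(S) - f(S')| < \epsilon$. Then for every $\epsilon > 0$ there exist a positive integer $K$, a function $\zeta : [0,1]^m \times \{1,\dots,T\} \to \mathbb{R}^K$ that is continuous in its first argument, and a continuous function $\gamma : \mathbb{R}^K \to \mathbb{R}$ such that for every $S = (S_1,\dots,S_T) \in \mathcal{X}$, $$\left| f(S) - \gamma\Big( \underset{\mathbf{x} \in S_t,\ t \in \{1,\dots,T\}}{MAX} \{ \zeta(\mathbf{x}, t) \} \Big) \right| < \epsilon,$$ where $MAX$ denotes the element-wise (coordinate-wise) maximum of a finite set of vectors in $\mathbb{R}^K$.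
   Context: The Hausdorff distance between finite sets $A, B \subseteq [0,1]^m$ is $d_H(A,B) = \max\{\sup_{a\in A}\inf_{b\in B}\|a-b\|, \sup_{b\in B}\inf_{a\in A}\|a-b\|\}$. The maximum in the displayed formula is taken over all pairs $(\mathbf{x}, t)$ with $t \in \{1,\dots,T\}$ and $\mathbf{x}$ a point of the $t$-th frame $S_t$. *)

theory Defs
  imports "HOL-Analysis.Analysis"
begin

definition unit_cube :: "(real ^ 'm) set" where
  "unit_cube = {x. \<forall>i. 0 \<le> x $ i \<and> x $ i \<le> 1}"

definition hausdorff_dist :: "(real ^ 'm) set \<Rightarrow> (real ^ 'm) set \<Rightarrow> real" where
  "hausdorff_dist A B =
     max (Sup ((\<lambda>a. Inf ((\<lambda>b. dist a b) ` B)) ` A))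
         (Sup ((\<lambda>b. Inf ((\<lambda>a. dist a b) ` A)) ` B))"

text \<open>Point cloud sequences of length T with n points per frame; frames indexed by 1..T,
  and set to the empty set outside 1..T so that a sequence is a unique object.\<close>
definition pc_seqs :: "nat \<Rightarrow> nat \<Rightarrow> (nat \<Rightarrow> (real ^ 'm) set) set" where
  "pc_seqs n T = {S. (\<forall>t\<in>{1..T}. S t \<subseteq> unit_cube \<and> card (S t) = n)
                    \<and> (\<forall>t. t \<notin> {1..T} \<longrightarrow> S t = {})}"

definition d_seq :: "nat \<Rightarrow> (nat \<Rightarrow> (real ^ 'm) set) \<Rightarrow> (nat \<Rightarrow> (real ^ 'm) set) \<Rightarrow> real" where
  "d_seq T S S' = Max ((\<lambda>t. hausdorff_dist (S t) (S' t)) ` {1..T})"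

text \<open>Coordinatewise maximum of the finite set of vectors zeta(x,t), x in S_t, t in 1..T;
  vectors of R^K are represented as functions nat => real, coordinates k < K
  (coordinates k >= K are set to 0).\<close>
definition MAX_feat :: "nat \<Rightarrow> nat \<Rightarrow> (real ^ 'm \<Rightarrow> nat \<Rightarrow> (nat \<Rightarrow> real))
                        \<Rightarrow> (nat \<Rightarrow> (real ^ 'm) set) \<Rightarrow> (nat \<Rightarrow> real)" where
  "MAX_feat K T \<zeta> S = (\<lambda>k. if k < K then Max {\<zeta> x t k | x t. t \<in> {1..T} \<and> x \<in> S t} else 0)"

end

theory Submission
  imports Defs
begin

lemma hd_le:
  fixes A B :: "(real ^ 'm) set"
  assumes "finite A" "finite B" "A \<noteq> {}" "B \<noteq> {}"
    and AB: "\<forall>a\<in>A. \<exists>b\<in>B. dist a b \<le> r" and BA: "\<forall>b\<in>B. \<exists>a\<in>A. dist a b \<le> r"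
  shows "hausdorff_dist A B \<le> r"
proof -
  have 1: "Sup ((\<lambda>a. Inf ((\<lambda>b. dist a b) ` B)) ` A) \<le> r"
  proof (rule cSup_least)
    show "(\<lambda>a. Inf ((\<lambda>b. dist a b) ` B)) ` A \<noteq> {}" using assms by auto
  next
    fix y assume "y \<in> (\<lambda>a. Inf ((\<lambda>b. dist a b) ` B)) ` A"
    then obtain a where a: "a \<in> A" "y = Inf ((\<lambda>b. dist a b) ` B)" by auto
    then obtain b where b: "b \<in> B" "dist a b \<le> r" using AB by auto
    have "Inf ((\<lambda>b. dist a b) ` B) \<le> dist a b"
      by (rule cInf_lower) (use b assms in auto)
    then show "y \<le> r" using a b by auto
  qed
  have 2: "Sup ((\<lambda>b. Inf ((\<lambda>a. dist a b) ` A)) ` B) \<le> r"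
  proof (rule cSup_least)
    show "(\<lambda>b. Inf ((\<lambda>a. dist a b) ` A)) ` B \<noteq> {}" using assms by auto
  next
    fix y assume "y \<in> (\<lambda>b. Inf ((\<lambda>a. dist a b) ` A)) ` B"
    then obtain b where b: "b \<in> B" "y = Inf ((\<lambda>a. dist a b) ` A)" by auto
    then obtain a where a: "a \<in> A" "dist a b \<le> r" using BA by auto
    have "Inf ((\<lambda>a. dist a b) ` A) \<le> dist a b"
      by (rule cInf_lower) (use a assms in auto)
    then show "y \<le> r" using a b by auto
  qed
  show ?thesis using 1 2 unfolding hausdorff_dist_def by simp
qed

lemma pc_fin:
  assumes "S \<in> pc_seqs n T" "n > 0" "t \<in> {1..T}"
  shows "finite (S t)" "S t \<noteq> {}"
  using assms unfolding pc_seqs_def by (auto intro: card_ge_0_finite, fastforce)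

lemma dseq_le:
  fixes S S' :: "nat \<Rightarrow> (real ^ 'm) set"
  assumes "S \<in> pc_seqs n T" "S' \<in> pc_seqs n T" "n > 0" "T > 0"
    and AB: "\<forall>t\<in>{1..T}. \<forall>a\<in>S t. \<exists>b\<in>S' t. dist a b \<le> r"
    and BA: "\<forall>t\<in>{1..T}. \<forall>b\<in>S' t. \<exists>a\<in>S t. dist a b \<le> r"
  shows "d_seq T S S' \<le> r"
  unfolding d_seq_def
proof (subst Max_le_iff)
  show "finite ((\<lambda>t. hausdorff_dist (S t) (S' t)) ` {1..T})" by simp
  show "(\<lambda>t. hausdorff_dist (S t) (S' t)) ` {1..T} \<noteq> {}" using assms by auto
  show "\<forall>a\<in>(\<lambda>t. hausdorff_dist (S t) (S' t)) ` {1..T}. a \<le> r"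
  proof
    fix a assume "a \<in> (\<lambda>t. hausdorff_dist (S t) (S' t)) ` {1..T}"
    then obtain t where t: "t \<in> {1..T}" "a = hausdorff_dist (S t) (S' t)" by auto
    show "a \<le> r" unfolding t(2)
      by (rule hd_le) (use pc_fin[OF assms(1,3) t(1)] pc_fin[OF assms(2,3) t(1)] AB BA t(1) in auto)
  qed
qed

lemma near_transfer:
  fixes S S' :: "nat \<Rightarrow> (real ^ 'm) set"
  assumes grid: "\<forall>x\<in>unit_cube. \<exists>c\<in>G. dist x c \<le> h"
    and "S \<in> pc_seqs n T" "S' \<in> pc_seqs n T" "n > 0" "T > 0"
    and AB: "\<forall>c\<in>G. \<forall>t\<in>{1..T}. (\<exists>x\<in>S t. dist x c \<le> h) \<longrightarrow> (\<exists>x\<in>S' t. dist x c \<le> r)"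
    and BA: "\<forall>c\<in>G. \<forall>t\<in>{1..T}. (\<exists>x\<in>S' t. dist x c \<le> h) \<longrightarrow> (\<exists>x\<in>S t. dist x c \<le> r)"
  shows "d_seq T S S' \<le> h + r"
proof (rule dseq_le[OF assms(2-5)])
  show "\<forall>t\<in>{1..T}. \<forall>a\<in>S t. \<exists>b\<in>S' t. dist a b \<le> h + r"
  proof (intro ballI)
    fix t a assume t: "t \<in> {1..T}" and a: "a \<in> S t"
    have "a \<in> unit_cube" using assms(2) t a unfolding pc_seqs_def by auto
    then obtain c where c: "c \<in> G" "dist a c \<le> h" using grid by auto
    then obtain b where b: "b \<in> S' t" "dist b c \<le> r" using AB t a c by blast
    have "dist a b \<le> dist a c + dist b c" by (rule dist_triangle2)
    then show "\<exists>b\<in>S' t. dist a b \<le> h + r" using b c by force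
  qed
  show "\<forall>t\<in>{1..T}. \<forall>b\<in>S' t. \<exists>a\<in>S t. dist a b \<le> h + r"
  proof (intro ballI)
    fix t b assume t: "t \<in> {1..T}" and b: "b \<in> S' t"
    have "b \<in> unit_cube" using assms(3) t b unfolding pc_seqs_def by auto
    then obtain c where c: "c \<in> G" "dist b c \<le> h" using grid by auto
    then obtain a where a: "a \<in> S t" "dist a c \<le> r" using BA t b c by blast
    have "dist a b \<le> dist a c + dist b c" by (rule dist_triangle2)
    then show "\<exists>a\<in>S t. dist a b \<le> h + r" using a c by force
  qed
qed

lemma feat_set:
  fixes \<zeta> :: "real ^ 'm \<Rightarrow> nat \<Rightarrow> (nat \<Rightarrow> real)"
  assumes "S \<in> pc_seqs n T" "n > 0" "T > 0"
  shows "finite {\<zeta> x t k | x t. t \<in> {1..T} \<and> x \<in> S t}"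
    "{\<zeta> x t k | x t. t \<in> {1..T} \<and> x \<in> S t} \<noteq> {}"
proof -
  have "{\<zeta> x t k | x t. t \<in> {1..T} \<and> x \<in> S t} = (\<lambda>(t,x). \<zeta> x t k) ` (SIGMA t:{1..T}. S t)"
    by force
  moreover have "finite (SIGMA t:{1..T}. S t)" using pc_fin[OF assms(1,2)] by auto
  ultimately show "finite {\<zeta> x t k | x t. t \<in> {1..T} \<and> x \<in> S t}" by simp
  obtain x where "x \<in> S 1" using pc_fin(2)[OF assms(1,2), of 1] assms(3) by auto
  then have "\<zeta> x 1 k \<in> {\<zeta> x t k | x t. t \<in> {1..T} \<and> x \<in> S t}" using assms(3) by force
  then show "{\<zeta> x t k | x t. t \<in> {1..T} \<and> x \<in> S t} \<noteq> {}" by blast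
qed

lemma feat_ge:
  fixes \<zeta> :: "real ^ 'm \<Rightarrow> nat \<Rightarrow> (nat \<Rightarrow> real)"
  assumes "S \<in> pc_seqs n T" "n > 0" "T > 0" "k < K" "t \<in> {1..T}" "x \<in> S t"
  shows "\<zeta> x t k \<le> MAX_feat K T \<zeta> S k"
  unfolding MAX_feat_def using assms feat_set[OF assms(1-3), of \<zeta> k]
  by (auto intro!: Max_ge)

lemma feat_attained:
  fixes \<zeta> :: "real ^ 'm \<Rightarrow> nat \<Rightarrow> (nat \<Rightarrow> real)"
  assumes "S \<in> pc_seqs n T" "n > 0" "T > 0" "k < K"
  shows "\<exists>t\<in>{1..T}. \<exists>x\<in>S t. MAX_feat K T \<zeta> S k = \<zeta> x t k"
proof -
  have "Max {\<zeta> x t k | x t. t \<in> {1..T} \<and> x \<in> S t} \<in> {\<zeta> x t k | x t. t \<in> {1..T} \<and> x \<in> S t}"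
    using feat_set[OF assms(1-3), of \<zeta> k] by (rule Max_in)
  then show ?thesis unfolding MAX_feat_def using assms(4) by auto
qed

lemma grid_exists:
  assumes "h > 0"
  shows "\<exists>G::(real^'m) set. finite G \<and> G \<noteq> {} \<and> (\<forall>x\<in>unit_cube. \<exists>c\<in>G. dist x c \<le> h)"
proof -
  obtain N::nat where N: "real CARD('m) / h < N" using reals_Archimedean2 by blast
  have "real CARD('m) / h > 0" using assms by simp
  then have Npos: "N > 0" using N by linarith
  define G where "G = (\<lambda>g::'m\<Rightarrow>nat. \<chi> i. real (g i) / real N) ` {g. \<forall>i. g i \<le> N}"
  have "{g::'m\<Rightarrow>nat. \<forall>i. g i \<le> N} \<subseteq> Pi\<^sub>E UNIV (\<lambda>_. {..N})"
    by (auto simp: PiE_UNIV_domain)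
  then have "finite {g::'m\<Rightarrow>nat. \<forall>i. g i \<le> N}"
    by (rule finite_subset) (auto intro: finite_PiE)
  then have fin: "finite G" unfolding G_def by simp
  have ne: "G \<noteq> {}" unfolding G_def by auto
  have cov: "\<exists>c\<in>G. dist x c \<le> h" if x: "x \<in> unit_cube" for x
  proof -
    define g where "g i = nat \<lfloor>x$i * N\<rfloor>" for i
    have x01: "0 \<le> x$i" "x$i \<le> 1" for i using x unfolding unit_cube_def by auto
    have gle: "g i \<le> N" for i
    proof -
      have "x$i * N \<le> N" using x01[of i] by (simp add: mult_left_le_one_le)
      then have "\<lfloor>x$i * N\<rfloor> \<le> int N" by (metis floor_mono floor_of_nat)
      then show ?thesis unfolding g_def by simp
    qed
    define c where "c = (\<chi> i. real (g i) / real N)"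
    have cG: "c \<in> G" unfolding G_def c_def using gle by auto
    have comp: "\<bar>(x - c)$i\<bar> \<le> 1 / N" for i
    proof -
      have nn: "0 \<le> x$i * N" using x01[of i] by simp
      have "real (g i) = \<lfloor>x$i * N\<rfloor>" unfolding g_def using nn by simp
      then have "x$i * N - 1 < real (g i)" "real (g i) \<le> x$i * N"
        by (simp_all add: floor_le_iff)
      then have "\<bar>x$i * N - real (g i)\<bar> \<le> 1" by linarith
      moreover have "x$i - real (g i) / N = (x$i * N - real (g i)) / N" using Npos
        by (simp add: field_simps)
      ultimately have "\<bar>x$i - real (g i) / N\<bar> \<le> 1 / N"
        by (simp add: divide_right_mono)
      then show ?thesis unfolding c_def by simp
    qed
    have "dist x c = norm (x - c)" by (simp add: dist_norm)
    also have "\<dots> \<le> (\<Sum>i\<in>UNIV. \<bar>(x - c)$i\<bar>)" by (rule norm_le_l1_cart)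
    also have "\<dots> \<le> (\<Sum>i\<in>(UNIV::'m set). 1 / N)" by (rule sum_mono) (use comp in auto)
    also have "\<dots> = real CARD('m) / N" by simp
    also have "\<dots> \<le> h" using N Npos assms by (simp add: field_simps)
    finally show ?thesis using cG by blast
  qed
  show ?thesis using fin ne cov by blast
qed

lemma f_bounded:
  fixes f :: "(nat \<Rightarrow> (real ^ 'm) set) \<Rightarrow> real" and G :: "(real ^ 'm) set"
  assumes fin: "finite G" and grid: "\<forall>x\<in>unit_cube. \<exists>c\<in>G. dist x c \<le> h"
    and "n > 0" "T > 0"
    and fc: "\<forall>S\<in>pc_seqs n T. \<forall>S'\<in>pc_seqs n T. d_seq T S S' \<le> h + h \<longrightarrow> \<bar>f S - f S'\<bar> < e"
  shows "\<exists>B. \<forall>S\<in>pc_seqs n T. \<bar>f S\<bar> \<le> B"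
proof -
  define X where "X = (pc_seqs n T :: (nat \<Rightarrow> (real ^ 'm) set) set)"
  define P where "P S = {(c,t). c \<in> G \<and> t \<in> {1..T} \<and> (\<exists>x\<in>S t. dist x c \<le> h)}"
    for S :: "nat \<Rightarrow> (real ^ 'm) set"
  have "P ` X \<subseteq> Pow (G \<times> {1..T})" unfolding P_def by auto
  then have finP: "finite (P ` X)" by (rule finite_subset) (use fin in auto)
  define rep where "rep p = (SOME S. S \<in> X \<and> P S = p)" for p
  define B where "B = Max ((\<lambda>p. \<bar>f (rep p)\<bar>) ` (P ` X)) + e"
  have "\<bar>f S\<bar> \<le> B" if S: "S \<in> X" for S
  proof -
    have "\<exists>R. R \<in> X \<and> P R = P S" using S by blast
    then have R: "rep (P S) \<in> X" "P (rep (P S)) = P S"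
      unfolding rep_def by (metis (mono_tags, lifting) someI_ex)+
    define R where "R = rep (P S)"
    have "d_seq T S R \<le> h + h"
    proof (rule near_transfer[OF grid _ _ assms(3,4)])
      show "S \<in> pc_seqs n T" "R \<in> pc_seqs n T" using S R unfolding X_def R_def by auto
      show "\<forall>c\<in>G. \<forall>t\<in>{1..T}. (\<exists>x\<in>S t. dist x c \<le> h) \<longrightarrow> (\<exists>x\<in>R t. dist x c \<le> h)"
      proof (intro ballI impI)
        fix c t assume "c \<in> G" "t \<in> {1..T}" "\<exists>x\<in>S t. dist x c \<le> h"
        then have "(c,t) \<in> P R" using R unfolding R_def P_def by auto
        then show "\<exists>x\<in>R t. dist x c \<le> h" unfolding P_def by auto
      qed
      show "\<forall>c\<in>G. \<forall>t\<in>{1..T}. (\<exists>x\<in>R t. dist x c \<le> h) \<longrightarrow> (\<exists>x\<in>S t. dist x c \<le> h)"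
      proof (intro ballI impI)
        fix c t assume "c \<in> G" "t \<in> {1..T}" "\<exists>x\<in>R t. dist x c \<le> h"
        then have "(c,t) \<in> P R" unfolding P_def by auto
        then have "(c,t) \<in> P S" using R unfolding R_def by simp
        then show "\<exists>x\<in>S t. dist x c \<le> h" unfolding P_def by auto
      qed
    qed
    then have "\<bar>f S - f R\<bar> < e" using fc S R unfolding X_def R_def by auto
    moreover have "\<bar>f R\<bar> \<le> Max ((\<lambda>p. \<bar>f (rep p)\<bar>) ` (P ` X))"
      unfolding R_def by (rule Max_ge) (use finP S in auto)
    ultimately show ?thesis unfolding B_def by linarith
  qed
  then show ?thesis unfolding X_def by blast
qed

lemma gamma_construct:
  fixes \<Phi> :: "'s \<Rightarrow> (nat \<Rightarrow> real)" and f :: "'s \<Rightarrow> real" and X :: "'s set"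
  assumes Bf: "\<forall>S\<in>X. \<bar>f S\<bar> \<le> B" and eta: "\<eta> > 0"
    and close: "\<forall>S\<in>X. \<forall>S'\<in>X. (\<forall>k<K. \<bar>\<Phi> S k - \<Phi> S' k\<bar> \<le> \<eta>) \<longrightarrow> \<bar>f S - f S'\<bar> < e"
  shows "\<exists>\<gamma>. continuous_on UNIV \<gamma> \<and> (\<forall>S\<in>X. \<bar>f S - \<gamma> (\<Phi> S)\<bar> \<le> e)"
proof (cases "X = {}")
  case True
  then show ?thesis by (intro exI[of _ "\<lambda>_. 0"]) auto
next
  case Xne: False
  define B' where "B' = max B 1"
  have B'pos: "B' > 0" unfolding B'_def by simp
  have Bf': "\<forall>S\<in>X. \<bar>f S\<bar> \<le> B'" using Bf unfolding B'_def by force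
  define L where "L = 2 * B' / \<eta>"
  have Lpos: "L > 0" unfolding L_def using B'pos eta by simp
  define D where "D v w = (\<Sum>k<K. \<bar>v k - w k\<bar>)" for v w :: "nat \<Rightarrow> real"
  have Dnn: "D v w \<ge> 0" for v w unfolding D_def by (simp add: sum_nonneg)
  have Dsym: "D v w = D w v" for v w unfolding D_def by (simp add: abs_minus_commute)
  have Dtri: "D v u \<le> D v w + D w u" for v w u
    unfolding D_def sum.distrib[symmetric] by (rule sum_mono) (simp add: abs_triangle_ineq[of "v _ - w _" "w _ - u _", simplified])
  define A where "A v = (\<lambda>S. f S + L * D v (\<Phi> S)) ` X" for v
  define \<gamma> where "\<gamma> v = Inf (A v)" for v
  have Ane: "A v \<noteq> {}" for v unfolding A_def using Xne by auto
  have Abdd: "bdd_below (A v)" for v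
  proof (rule bdd_belowI[where m = "-B'"])
    fix y assume "y \<in> A v"
    then obtain S where S: "S \<in> X" "y = f S + L * D v (\<Phi> S)" unfolding A_def by auto
    have "L * D v (\<Phi> S) \<ge> 0" using Lpos Dnn by simp
    then show "-B' \<le> y" using Bf' S by force
  qed
  have lip: "\<gamma> v \<le> \<gamma> w + L * D v w" for v w
  proof -
    have "\<gamma> v - L * D v w \<le> \<gamma> w" unfolding \<gamma>_def
    proof (rule cInf_greatest[OF Ane])
      fix y assume "y \<in> A w"
      then obtain S where S: "S \<in> X" "y = f S + L * D w (\<Phi> S)" unfolding A_def by auto
      have "Inf (A v) \<le> f S + L * D v (\<Phi> S)"
        by (rule cInf_lower[OF _ Abdd]) (use S in \<open>auto simp: A_def\<close>)
      also have "\<dots> \<le> f S + L * (D v w + D w (\<Phi> S))"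
        using Dtri[of v "\<Phi> S" w] Lpos by simp
      finally show "Inf (A v) - L * D v w \<le> y" using S by (simp add: algebra_simps)
    qed
    then show ?thesis by simp
  qed
  have cont: "continuous_on UNIV \<gamma>"
  proof (rule continuous_at_imp_continuous_on, intro ballI)
    fix v0 :: "nat \<Rightarrow> real"
    have cD: "continuous_on UNIV (\<lambda>v. L * D v v0)" unfolding D_def
      by (intro continuous_intros continuous_on_product_coordinates)
    then have "isCont (\<lambda>v. L * D v v0) v0"
      by (simp add: continuous_on_eq_continuous_at)
    then have t0: "((\<lambda>v. L * D v v0) \<longlongrightarrow> 0) (at v0)"
      using isContD[of v0 "\<lambda>v. L * D v v0"] by (simp add: D_def)
    have "((\<lambda>v. \<gamma> v - \<gamma> v0) \<longlongrightarrow> 0) (at v0)"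
    proof (rule Lim_null_comparison[OF _ t0])
      show "\<forall>\<^sub>F v in at v0. norm (\<gamma> v - \<gamma> v0) \<le> L * D v v0"
      proof (intro always_eventually allI)
        fix v
        have "\<gamma> v \<le> \<gamma> v0 + L * D v v0" "\<gamma> v0 \<le> \<gamma> v + L * D v0 v" using lip by auto
        then show "norm (\<gamma> v - \<gamma> v0) \<le> L * D v v0" using Dsym[of v v0] by simp
      qed
    qed
    then have "(\<gamma> \<longlongrightarrow> \<gamma> v0) (at v0)" by (rule LIM_zero_cancel)
    then show "isCont \<gamma> v0" by (simp add: continuous_at)
  qed
  have approx: "\<bar>f S0 - \<gamma> (\<Phi> S0)\<bar> \<le> e" if S0: "S0 \<in> X" for S0
  proof -
    have up: "\<gamma> (\<Phi> S0) \<le> f S0"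
    proof -
      have "\<gamma> (\<Phi> S0) \<le> f S0 + L * D (\<Phi> S0) (\<Phi> S0)" unfolding \<gamma>_def
        by (rule cInf_lower[OF _ Abdd]) (use S0 in \<open>auto simp: A_def\<close>)
      then show ?thesis by (simp add: D_def)
    qed
    have lo: "f S0 - e \<le> \<gamma> (\<Phi> S0)" unfolding \<gamma>_def
    proof (rule cInf_greatest[OF Ane])
      fix y assume "y \<in> A (\<Phi> S0)"
      then obtain S where S: "S \<in> X" "y = f S + L * D (\<Phi> S0) (\<Phi> S)" unfolding A_def by auto
      have LD: "L * D (\<Phi> S0) (\<Phi> S) \<ge> 0" using Lpos Dnn by simp
      show "f S0 - e \<le> y"
      proof (cases "\<forall>k<K. \<bar>\<Phi> S0 k - \<Phi> S k\<bar> \<le> \<eta>")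
        case True
        then have "\<bar>f S0 - f S\<bar> < e" using close S S0 by blast
        then show ?thesis using S LD by linarith
      next
        case False
        then obtain k where k: "k < K" "\<bar>\<Phi> S0 k - \<Phi> S k\<bar> > \<eta>" by force
        have "\<bar>\<Phi> S0 k - \<Phi> S k\<bar> \<le> D (\<Phi> S0) (\<Phi> S)" unfolding D_def
          by (rule member_le_sum) (use k in auto)
        then have "\<eta> \<le> D (\<Phi> S0) (\<Phi> S)" using k by linarith
        then have "L * \<eta> \<le> L * D (\<Phi> S0) (\<Phi> S)" using Lpos by simp
        moreover have "L * \<eta> = 2 * B'" unfolding L_def using eta by simp
        moreover have "\<bar>f S\<bar> \<le> B'" "\<bar>f S0\<bar> \<le> B'" using Bf' S S0 by auto
        moreover have "\<bar>f S0 - f S0\<bar> < e" using close S0 eta by force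
        ultimately show ?thesis using S B'pos by linarith
      qed
    qed
    show ?thesis using up lo by linarith
  qed
  show ?thesis using cont approx by blast
qed

theorem theorem1:
  fixes n T :: nat and f :: "(nat \<Rightarrow> (real ^ 'm) set) \<Rightarrow> real"
  assumes "n > 0" and "T > 0"
    and f_cont: "\<forall>\<epsilon>>0. \<exists>\<delta>>0. \<forall>S\<in>pc_seqs n T. \<forall>S'\<in>pc_seqs n T.
                   d_seq T S S' < \<delta> \<longrightarrow> \<bar>f S - f S'\<bar> < \<epsilon>"
    and "\<epsilon> > 0"
  shows "\<exists>K::nat. K > 0 \<and>
           (\<exists>(\<zeta> :: real ^ 'm \<Rightarrow> nat \<Rightarrow> (nat \<Rightarrow> real)) (\<gamma> :: (nat \<Rightarrow> real) \<Rightarrow> real).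
              (\<forall>t\<in>{1..T}. continuous_on unit_cube (\<lambda>x. \<zeta> x t)) \<and>
              continuous_on {v. \<forall>k\<ge>K. v k = 0} \<gamma> \<and>
              (\<forall>S\<in>pc_seqs n T. \<bar>f S - \<gamma> (MAX_feat K T \<zeta> S)\<bar> < \<epsilon>))"
proof -
  define X where "X = (pc_seqs n T :: (nat \<Rightarrow> (real ^ 'm) set) set)"
  obtain \<delta>1 where d1: "\<delta>1 > 0" and fd: "\<forall>S\<in>X. \<forall>S'\<in>X. d_seq T S S' < \<delta>1 \<longrightarrow> \<bar>f S - f S'\<bar> < \<epsilon>/2"
    using f_cont \<open>\<epsilon> > 0\<close> unfolding X_def by (meson half_gt_zero)
  define h where "h = min (\<delta>1/4) (1/4)"
  have hpos: "h > 0" and h1: "h \<le> 1/4" and h2: "4 * h \<le> \<delta>1" using d1 unfolding h_def by auto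
  obtain G :: "(real ^ 'm) set" where finG: "finite G" and Gne: "G \<noteq> {}"
    and grid: "\<forall>x\<in>unit_cube. \<exists>c\<in>G. dist x c \<le> h"
    using grid_exists[OF hpos] by blast
  obtain B where Bf: "\<forall>S\<in>X. \<bar>f S\<bar> \<le> B"
  proof -
    have "\<exists>B. \<forall>S\<in>pc_seqs n T. \<bar>f S\<bar> \<le> B"
    proof (rule f_bounded[OF finG grid assms(1,2)])
      show "\<forall>S\<in>pc_seqs n T. \<forall>S'\<in>pc_seqs n T. d_seq T S S' \<le> h + h \<longrightarrow> \<bar>f S - f S'\<bar> < \<epsilon>/2"
        using fd hpos h2 unfolding X_def by force
    qed
    then show ?thesis using that unfolding X_def by blast
  qed
  define I where "I = G \<times> {1..T}"
  define K where "K = card I"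
  have finI: "finite I" unfolding I_def using finG by simp
  have "I \<noteq> {}" unfolding I_def using Gne \<open>T > 0\<close> by auto
  then have Kpos: "K > 0" unfolding K_def using finI by (simp add: card_gt_0_iff)
  obtain e0 where e0: "bij_betw e0 {0..<K} I" using ex_bij_betw_nat_finite[OF finI] unfolding K_def by blast
  define \<zeta> where "\<zeta> x t k = (if k < K then (if t = snd (e0 k) then - min (dist x (fst (e0 k))) 1 else -1) else (0::real))"
    for x :: "real ^ 'm" and t k
  define \<Phi> where "\<Phi> S = MAX_feat K T \<zeta> S" for S
  have key: "\<exists>y\<in>S' t. dist y c \<le> h + h"
    if S: "S \<in> X" and S': "S' \<in> X" and cl: "\<forall>k<K. \<bar>\<Phi> S k - \<Phi> S' k\<bar> \<le> h"
      and c: "c \<in> G" and t: "t \<in> {1..T}" and x: "x \<in> S t" "dist x c \<le> h" for S S' c t x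
  proof -
    have "(c,t) \<in> e0 ` {0..<K}" using e0 c t unfolding bij_betw_def I_def by auto
    then obtain k where k: "k < K" "e0 k = (c,t)" by auto
    have "\<zeta> x t k = - min (dist x c) 1" unfolding \<zeta>_def using k by simp
    moreover have "\<zeta> x t k \<le> \<Phi> S k" unfolding \<Phi>_def
      by (rule feat_ge) (use S assms(1,2) k t x in \<open>auto simp: X_def\<close>)
    ultimately have "\<Phi> S k \<ge> - h" using x by linarith
    then have ge: "\<Phi> S' k \<ge> - h - h" using cl k by force
    obtain t' y where t': "t' \<in> {1..T}" and y: "y \<in> S' t'" and eq: "\<Phi> S' k = \<zeta> y t' k"
      using feat_attained[of S' n T k K \<zeta>] S' assms(1,2) k unfolding \<Phi>_def X_def by blast
    show ?thesis
    proof (cases "t' = t")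
      case True
      then have "\<Phi> S' k = - min (dist y c) 1" using eq k unfolding \<zeta>_def by simp
      then have "dist y c \<le> h + h" using ge h1 by (simp add: min_def split: if_splits)
      then show ?thesis using y True by blast
    next
      case False
      then have "\<Phi> S' k = -1" using eq k unfolding \<zeta>_def by simp
      then show ?thesis using ge h1 by simp
    qed
  qed
  have close: "\<forall>S\<in>X. \<forall>S'\<in>X. (\<forall>k<K. \<bar>\<Phi> S k - \<Phi> S' k\<bar> \<le> h) \<longrightarrow> \<bar>f S - f S'\<bar> < \<epsilon>/2"
  proof (intro ballI impI)
    fix S S' assume S: "S \<in> X" and S': "S' \<in> X" and cl: "\<forall>k<K. \<bar>\<Phi> S k - \<Phi> S' k\<bar> \<le> h"
    have cl': "\<forall>k<K. \<bar>\<Phi> S' k - \<Phi> S k\<bar> \<le> h" using cl by (simp add: abs_minus_commute)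
    have "d_seq T S S' \<le> h + (h + h)"
    proof (rule near_transfer[OF grid _ _ assms(1,2)])
      show "S \<in> pc_seqs n T" "S' \<in> pc_seqs n T" using S S' unfolding X_def by auto
      show "\<forall>c\<in>G. \<forall>t\<in>{1..T}. (\<exists>x\<in>S t. dist x c \<le> h) \<longrightarrow> (\<exists>x\<in>S' t. dist x c \<le> h + h)"
        using key[OF S S' cl] by blast
      show "\<forall>c\<in>G. \<forall>t\<in>{1..T}. (\<exists>x\<in>S' t. dist x c \<le> h) \<longrightarrow> (\<exists>x\<in>S t. dist x c \<le> h + h)"
        using key[OF S' S cl'] by blast
    qed
    then have "d_seq T S S' < \<delta>1" using h2 hpos by linarith
    then show "\<bar>f S - f S'\<bar> < \<epsilon>/2" using fd S S' by blast
  qed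
  obtain \<gamma> where gc: "continuous_on UNIV \<gamma>" and ga: "\<forall>S\<in>X. \<bar>f S - \<gamma> (\<Phi> S)\<bar> \<le> \<epsilon>/2"
    using gamma_construct[OF Bf hpos close] by blast
  have zc: "\<forall>t\<in>{1..T}. continuous_on unit_cube (\<lambda>x. \<zeta> x t)"
  proof (intro ballI continuous_on_coordinatewise_then_product)
    fix t k
    show "continuous_on unit_cube (\<lambda>x. \<zeta> x t k)"
      by (cases "k < K"; cases "t = snd (e0 k)") (auto simp: \<zeta>_def intro!: continuous_intros)
  qed
  have "continuous_on {v. \<forall>k\<ge>K. v k = 0} \<gamma>" by (rule continuous_on_subset[OF gc]) simp
  moreover have "\<forall>S\<in>pc_seqs n T. \<bar>f S - \<gamma> (MAX_feat K T \<zeta> S)\<bar> < \<epsilon>"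
    using ga \<open>\<epsilon> > 0\<close> unfolding X_def \<Phi>_def by force
  ultimately show ?thesis using Kpos zc by blast
qed

end
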